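(* Let $S\subseteq\mathbb{F}_2^{27}$ be the linear subspace spanned by the six vectors (written as bit strings, coordinate $1$ leftmost, coordinate $27$ rightmost) $\xi^1 = 100010001010101010100011110$, $\xi^2 = 101010111001100000001010101$, $\xi^3 = 011001100111100111100110011$, $\xi^4 = 000111100000011001100001111$, $\xi^5 = 000000011111111000011111111$, $\xi^6 = 000000000000000111111111111$, and let $Q(x)= x_{1}x_{2} + x_{1}x_{3} + x_{1}x_{8} + x_{2}x_{4} + x_{2}x_{8} + x_{2}x_{16} + x_{3}x_{4} + x_{3}x_{8} + x_{3}x_{16} + x_{4}x_{8} + x_{8}x_{16}$ (mod $2$). Let $e=(e_1,\dots,e_{27})=(3, 5, 7, 5, 1, 3, 5, 7, 1, 3, 5, 5, 3, 7, 3, 3, 7, 1, 7, 3, 1, 5, 5, 5, 3, 5, 3)$ and $c_j=e^{\pi i e_j/4}$. Then $(-1)^{Q(x)}=\prod_{j=1}^{27}c_j^{x_j}$ for every $x\in S$, but there do not exist $c'_1,\dots,c'_{27}\in\{\pm1,\pm i\}$ with $(-1)^{Q(x)}=\prod_{j=1}^{27}(c'_j)^{x_j}$ for every $x\in S$. In particular the following statement (QFP) is false in general: "if $S$ is a linear subspace of $\mathbb{F}_2^n$, $Q:\mathbb{F}_2^n\to\mathbb{F}_2$ is a quadratic function, and there exist complex phases $c_j$ with $(-1)^{Q(x)}=\prod_j c_j^{x_j}$ for all $x\in S$, then the phases can be chosen from $\{\pm1,\pm i\}$."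
   Context: Vectors $x\in\mathbb{F}_2^{27}$ have coordinates $x_j\in\{0,1\}$, which are used as integer exponents in $c_j^{x_j}$. *)

theory Defs
  imports Complex_Main
begin

text \<open>Vectors of F_2^n are represented as functions x :: nat => nat with
  x j in {0,1} for 1 <= j <= n and x j = 0 outside {1..n}.  Addition is
  coordinatewise mod 2.\<close>

definition F2vec :: "nat \<Rightarrow> (nat \<Rightarrow> nat) set" where
  "F2vec n = {x. (\<forall>j. x j \<in> {0,1}) \<and> (\<forall>j. j \<notin> {1..n} \<longrightarrow> x j = 0)}"

definition F2add :: "(nat \<Rightarrow> nat) \<Rightarrow> (nat \<Rightarrow> nat) \<Rightarrow> nat \<Rightarrow> nat" where
  "F2add x y = (\<lambda>j. (x j + y j) mod 2)"

definition F2_subspace :: "nat \<Rightarrow> (nat \<Rightarrow> nat) set \<Rightarrow> bool" where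
  "F2_subspace n S \<longleftrightarrow> S \<subseteq> F2vec n \<and> (\<lambda>_. 0) \<in> S \<and> (\<forall>x\<in>S. \<forall>y\<in>S. F2add x y \<in> S)"

definition F2_span :: "(nat \<Rightarrow> nat \<Rightarrow> nat) \<Rightarrow> nat set \<Rightarrow> (nat \<Rightarrow> nat) set" where
  "F2_span v K = {(\<lambda>j. (\<Sum>k\<in>L. v k j) mod 2) | L. L \<subseteq> K}"

text \<open>Quadratic function F_2^n -> F_2: a polynomial of degree at most 2
  (using x_i^2 = x_i, linear terms are the diagonal terms a i i).\<close>
definition quadratic_fun :: "nat \<Rightarrow> ((nat \<Rightarrow> nat) \<Rightarrow> nat) \<Rightarrow> bool" where
  "quadratic_fun n Q \<longleftrightarrow> (\<exists>(a::nat \<Rightarrow> nat \<Rightarrow> nat) (d::nat). \<forall>x\<in>F2vec n.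
      Q x = (d + (\<Sum>i\<in>{1..n}. \<Sum>j\<in>{i..n}. a i j * x i * x j)) mod 2)"

definition vec_of_list :: "nat list \<Rightarrow> nat \<Rightarrow> nat" where
  "vec_of_list l = (\<lambda>j. if 1 \<le> j \<and> j \<le> length l then l ! (j - 1) else 0)"

definition xi :: "nat \<Rightarrow> nat \<Rightarrow> nat" where
  "xi k = vec_of_list (
     if k = 1 then [1, 0, 0, 0, 1, 0, 0, 0, 1, 0, 1, 0, 1, 0, 1, 0, 1, 0, 1, 0, 0, 0, 1, 1, 1, 1, 0]
     else if k = 2 then [1, 0, 1, 0, 1, 0, 1, 1, 1, 0, 0, 1, 1, 0, 0, 0, 0, 0, 0, 0, 1, 0, 1, 0, 1, 0, 1]
     else if k = 3 then [0, 1, 1, 0, 0, 1, 1, 0, 0, 1, 1, 1, 1, 0, 0, 1, 1, 1, 1, 0, 0, 1, 1, 0, 0, 1, 1]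
     else if k = 4 then [0, 0, 0, 1, 1, 1, 1, 0, 0, 0, 0, 0, 0, 1, 1, 0, 0, 1, 1, 0, 0, 0, 0, 1, 1, 1, 1]
     else if k = 5 then [0, 0, 0, 0, 0, 0, 0, 1, 1, 1, 1, 1, 1, 1, 1, 0, 0, 0, 0, 1, 1, 1, 1, 1, 1, 1, 1]
     else if k = 6 then [0, 0, 0, 0, 0, 0, 0, 0, 0, 0, 0, 0, 0, 0, 0, 1, 1, 1, 1, 1, 1, 1, 1, 1, 1, 1, 1]
     else [])"

definition S27 :: "(nat \<Rightarrow> nat) set" where
  "S27 = F2_span xi {1..6}"

definition Q27 :: "(nat \<Rightarrow> nat) \<Rightarrow> nat" where
  "Q27 x = (x 1 * x 2 + x 1 * x 3 + x 1 * x 8 + x 2 * x 4 + x 2 * x 8 + x 2 * x 16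
          + x 3 * x 4 + x 3 * x 8 + x 3 * x 16 + x 4 * x 8 + x 8 * x 16) mod 2"

definition e27 :: "nat \<Rightarrow> nat" where
  "e27 j = [3, 5, 7, 5, 1, 3, 5, 7, 1, 3, 5, 5, 3, 7, 3, 3, 7, 1, 7, 3, 1, 5, 5, 5, 3, 5, 3] ! (j - 1)"

definition c27 :: "nat \<Rightarrow> complex" where
  "c27 j = exp (complex_of_real (pi * real (e27 j) / 4) * \<i>)"

end

theory Submission
  imports Defs
begin

definition vb :: "bool \<Rightarrow> bool \<Rightarrow> bool \<Rightarrow> bool \<Rightarrow> bool \<Rightarrow> bool \<Rightarrow> nat \<Rightarrow> nat" where
 "vb b1 b2 b3 b4 b5 b6 = (\<lambda>j. ((if b1 then xi 1 j else 0) + (if b2 then xi 2 j else 0) + (if b3 then xi 3 j else 0)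
   + (if b4 then xi 4 j else 0) + (if b5 then xi 5 j else 0) + (if b6 then xi 6 j else 0)) mod 2)"

definition vx :: "nat set \<Rightarrow> nat \<Rightarrow> nat" where
  "vx L = (\<lambda>j. (\<Sum>k\<in>L. xi k j) mod 2)"

lemma s27: "(\<Sum>j\<in>{1..27::nat}. g j) = g 1 + g 2 + g 3 + g 4 + g 5 + g 6 + g 7 + g 8 + g 9 + g 10 + g 11 + g 12 + g 13 + g 14 + g 15 + g 16 + g 17 + g 18 + g 19 + g 20 + g 21 + g 22 + g 23 + g 24 + g 25 + g 26 + (g 27 :: 'a::comm_monoid_add)"
proof -
  have "{1..27::nat} = {1,2,3,4,5,6,7,8,9,10,11,12,13,14,15,16,17,18,19,20,21,22,23,24,25,26,27}"
    by (auto simp: atLeastAtMost_upt upt_rec)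
  then show ?thesis by (simp add: add.assoc)
qed

lemma S27_eq: "S27 = {vx L | L. L \<subseteq> {1..6}}"
  by (simp add: S27_def F2_span_def vx_def)

lemma vx_vb: assumes L: "L \<subseteq> {1..6}"
  shows "vx L = vb (1\<in>L) (2\<in>L) (3\<in>L) (4\<in>L) (5\<in>L) (6\<in>L)"
proof
  fix j
  have "(\<Sum>k\<in>L. xi k j) = (\<Sum>k\<in>{1..6} \<inter> L. xi k j)"
    using L by (simp add: Int_absorb1)
  also have "\<dots> = (\<Sum>k\<in>{1..6}. if k \<in> L then xi k j else 0)"
    by (rule sum.inter_restrict) simp
  also have "{1..6::nat} = {1,2,3,4,5,6}" by auto
  finally show "vx L j = vb (1\<in>L) (2\<in>L) (3\<in>L) (4\<in>L) (5\<in>L) (6\<in>L) j"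
    by (simp add: vx_def vb_def add.assoc)
qed

lemma mem_S27: "L \<subseteq> {1..6} \<Longrightarrow> vx L \<in> S27"
  unfolding S27_eq by blast

lemma S27_cases: "x \<in> S27 \<Longrightarrow> \<exists>b1 b2 b3 b4 b5 b6. x = vb b1 b2 b3 b4 b5 b6"
  unfolding S27_eq using vx_vb by blast

lemma xi_out: "j \<notin> {1..27} \<Longrightarrow> xi k j = 0"
  by (auto simp: xi_def vec_of_list_def)

lemma sym_diff_mod:
  fixes g :: "nat \<Rightarrow> nat"
  assumes "finite A" "finite B"
  shows "(sum g A + sum g B) mod 2 = sum g ((A - B) \<union> (B - A)) mod 2"
proof -
  have a: "sum g A = sum g (A \<inter> B) + sum g (A - B)"
    using assms(1) by (rule sum.Int_Diff)
  have b: "sum g B = sum g (B \<inter> A) + sum g (B - A)"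
    using assms(2) by (rule sum.Int_Diff)
  have ab: "B \<inter> A = A \<inter> B" by blast
  have c: "sum g ((A - B) \<union> (B - A)) = sum g (A - B) + sum g (B - A)"
    using assms by (intro sum.union_disjoint) auto
  show ?thesis unfolding a b c ab by presburger
qed

lemma F2add_vx: "finite L \<Longrightarrow> finite L' \<Longrightarrow> F2add (vx L) (vx L') = vx ((L - L') \<union> (L' - L))"
  unfolding F2add_def vx_def
  by (rule ext) (simp add: mod_add_eq sym_diff_mod)

lemma subspace: "F2_subspace 27 S27"
  unfolding F2_subspace_def
proof (intro conjI)
  show "S27 \<subseteq> F2vec 27"
  proof
    fix x assume "x \<in> S27"
    then obtain L where x: "x = vx L" unfolding S27_eq by blast
    show "x \<in> F2vec 27" unfolding F2vec_def x vx_def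
      using xi_out by auto
  qed
  show "(\<lambda>_. 0) \<in> S27"
    using mem_S27[of "{}"] by (simp add: vx_def)
  show "\<forall>x\<in>S27. \<forall>y\<in>S27. F2add x y \<in> S27"
  proof (intro ballI)
    fix x y assume "x \<in> S27" "y \<in> S27"
    then obtain L L' where "x = vx L" "y = vx L'" "L \<subseteq> {1..6}" "L' \<subseteq> {1..6}"
      unfolding S27_eq by blast
    moreover then have "finite L" "finite L'" by (auto intro: finite_subset)
    moreover have "(L - L') \<union> (L' - L) \<subseteq> {1..6}" using calculation by blast
    ultimately show "F2add x y \<in> S27"
      using F2add_vx mem_S27 by simp
  qed
qed

lemma double27: "(\<Sum>i\<in>{1..27::nat}. \<Sum>j\<in>{i..27}. g i j) =
   (\<Sum>i\<in>{1..27}. \<Sum>j\<in>{1..27}. if i \<le> j then g i j else (0::nat))"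
proof (rule sum.cong[OF refl])
  fix i :: nat assume "i \<in> {1..27}"
  then have "{i..27} = {1..27} \<inter> {j. i \<le> j}" by auto
  then show "(\<Sum>j\<in>{i..27}. g i j) = (\<Sum>j\<in>{1..27}. if i \<le> j then g i j else 0)"
    by (simp add: sum.inter_restrict)
qed

lemma quad: "quadratic_fun 27 Q27"
  unfolding quadratic_fun_def
proof (intro exI ballI)
  fix x :: "nat \<Rightarrow> nat"
  let ?a = "\<lambda>i j. if (i, j) \<in> {(1,2), (1,3), (1,8), (2,4), (2,8), (2,16), (3,4), (3,8), (3,16), (4,8), (8,16)} then 1 else (0::nat)"
  show "Q27 x = (0 + (\<Sum>i\<in>{1..27}. \<Sum>j\<in>{i..27}. ?a i j * x i * x j)) mod 2"
    unfolding double27 s27 by (simp add: Q27_def add.assoc)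
qed

definition w :: complex where "w = exp (complex_of_real (pi / 4) * \<i>)"

lemma c27_w: "c27 j = w ^ e27 j"
proof -
  have "complex_of_real (pi * real (e27 j) / 4) * \<i> = of_nat (e27 j) * (complex_of_real (pi / 4) * \<i>)"
    by simp
  then show ?thesis unfolding c27_def w_def by (simp only: exp_of_nat_mult)
qed

lemma w8: "w ^ 8 = 1"
proof -
  have "w ^ 8 = exp (of_nat 8 * (complex_of_real (pi / 4) * \<i>))"
    unfolding w_def by (simp only: exp_of_nat_mult)
  also have "of_nat 8 * (complex_of_real (pi / 4) * \<i>) = 2 * of_real pi * \<i>" by simp
  finally show ?thesis by simp
qed

lemma w4: "w ^ 4 = -1"
proof -
  have "w ^ 4 = exp (of_nat 4 * (complex_of_real (pi / 4) * \<i>))"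
    unfolding w_def by (simp only: exp_of_nat_mult)
  also have "of_nat 4 * (complex_of_real (pi / 4) * \<i>) = of_real pi * \<i>" by simp
  finally show ?thesis by simp
qed

lemma w_mod: "w ^ a = w ^ (a mod 8)"
proof -
  have "w ^ a = w ^ (8 * (a div 8) + a mod 8)" by simp
  also have "\<dots> = w ^ (a mod 8)" by (simp only: power_add power_mult w8) simp
  finally show ?thesis .
qed

lemma prod_pow: "(\<Prod>j\<in>A. (z ^ f j) ^ x j) = (z::complex) ^ (\<Sum>j\<in>A. f j * x j)"
  by (simp add: power_sum power_mult)

lemma xi_tab:
  "xi (Suc 0) (Suc 0) = 1"
  "xi (Suc 0) 2 = 0"
  "xi (Suc 0) 3 = 0"
  "xi (Suc 0) 4 = 0"
  "xi (Suc 0) 5 = 1"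
  "xi (Suc 0) 6 = 0"
  "xi (Suc 0) 7 = 0"
  "xi (Suc 0) 8 = 0"
  "xi (Suc 0) 9 = 1"
  "xi (Suc 0) 10 = 0"
  "xi (Suc 0) 11 = 1"
  "xi (Suc 0) 12 = 0"
  "xi (Suc 0) 13 = 1"
  "xi (Suc 0) 14 = 0"
  "xi (Suc 0) 15 = 1"
  "xi (Suc 0) 16 = 0"
  "xi (Suc 0) 17 = 1"
  "xi (Suc 0) 18 = 0"
  "xi (Suc 0) 19 = 1"
  "xi (Suc 0) 20 = 0"
  "xi (Suc 0) 21 = 0"
  "xi (Suc 0) 22 = 0"
  "xi (Suc 0) 23 = 1"
  "xi (Suc 0) 24 = 1"
  "xi (Suc 0) 25 = 1"
  "xi (Suc 0) 26 = 1"
  "xi (Suc 0) 27 = 0"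
  "xi 2 (Suc 0) = 1"
  "xi 2 2 = 0"
  "xi 2 3 = 1"
  "xi 2 4 = 0"
  "xi 2 5 = 1"
  "xi 2 6 = 0"
  "xi 2 7 = 1"
  "xi 2 8 = 1"
  "xi 2 9 = 1"
  "xi 2 10 = 0"
  "xi 2 11 = 0"
  "xi 2 12 = 1"
  "xi 2 13 = 1"
  "xi 2 14 = 0"
  "xi 2 15 = 0"
  "xi 2 16 = 0"
  "xi 2 17 = 0"
  "xi 2 18 = 0"
  "xi 2 19 = 0"
  "xi 2 20 = 0"
  "xi 2 21 = 1"
  "xi 2 22 = 0"
  "xi 2 23 = 1"
  "xi 2 24 = 0"
  "xi 2 25 = 1"
  "xi 2 26 = 0"
  "xi 2 27 = 1"
  "xi 3 (Suc 0) = 0"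
  "xi 3 2 = 1"
  "xi 3 3 = 1"
  "xi 3 4 = 0"
  "xi 3 5 = 0"
  "xi 3 6 = 1"
  "xi 3 7 = 1"
  "xi 3 8 = 0"
  "xi 3 9 = 0"
  "xi 3 10 = 1"
  "xi 3 11 = 1"
  "xi 3 12 = 1"
  "xi 3 13 = 1"
  "xi 3 14 = 0"
  "xi 3 15 = 0"
  "xi 3 16 = 1"
  "xi 3 17 = 1"
  "xi 3 18 = 1"
  "xi 3 19 = 1"
  "xi 3 20 = 0"
  "xi 3 21 = 0"
  "xi 3 22 = 1"
  "xi 3 23 = 1"
  "xi 3 24 = 0"
  "xi 3 25 = 0"
  "xi 3 26 = 1"
  "xi 3 27 = 1"
  "xi 4 (Suc 0) = 0"
  "xi 4 2 = 0"
  "xi 4 3 = 0"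
  "xi 4 4 = 1"
  "xi 4 5 = 1"
  "xi 4 6 = 1"
  "xi 4 7 = 1"
  "xi 4 8 = 0"
  "xi 4 9 = 0"
  "xi 4 10 = 0"
  "xi 4 11 = 0"
  "xi 4 12 = 0"
  "xi 4 13 = 0"
  "xi 4 14 = 1"
  "xi 4 15 = 1"
  "xi 4 16 = 0"
  "xi 4 17 = 0"
  "xi 4 18 = 1"
  "xi 4 19 = 1"
  "xi 4 20 = 0"
  "xi 4 21 = 0"
  "xi 4 22 = 0"
  "xi 4 23 = 0"
  "xi 4 24 = 1"
  "xi 4 25 = 1"
  "xi 4 26 = 1"
  "xi 4 27 = 1"
  "xi 5 (Suc 0) = 0"
  "xi 5 2 = 0"
  "xi 5 3 = 0"
  "xi 5 4 = 0"
  "xi 5 5 = 0"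
  "xi 5 6 = 0"
  "xi 5 7 = 0"
  "xi 5 8 = 1"
  "xi 5 9 = 1"
  "xi 5 10 = 1"
  "xi 5 11 = 1"
  "xi 5 12 = 1"
  "xi 5 13 = 1"
  "xi 5 14 = 1"
  "xi 5 15 = 1"
  "xi 5 16 = 0"
  "xi 5 17 = 0"
  "xi 5 18 = 0"
  "xi 5 19 = 0"
  "xi 5 20 = 1"
  "xi 5 21 = 1"
  "xi 5 22 = 1"
  "xi 5 23 = 1"
  "xi 5 24 = 1"
  "xi 5 25 = 1"
  "xi 5 26 = 1"
  "xi 5 27 = 1"
  "xi 6 (Suc 0) = 0"
  "xi 6 2 = 0"
  "xi 6 3 = 0"
  "xi 6 4 = 0"
  "xi 6 5 = 0"
  "xi 6 6 = 0"
  "xi 6 7 = 0"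
  "xi 6 8 = 0"
  "xi 6 9 = 0"
  "xi 6 10 = 0"
  "xi 6 11 = 0"
  "xi 6 12 = 0"
  "xi 6 13 = 0"
  "xi 6 14 = 0"
  "xi 6 15 = 0"
  "xi 6 16 = 1"
  "xi 6 17 = 1"
  "xi 6 18 = 1"
  "xi 6 19 = 1"
  "xi 6 20 = 1"
  "xi 6 21 = 1"
  "xi 6 22 = 1"
  "xi 6 23 = 1"
  "xi 6 24 = 1"
  "xi 6 25 = 1"
  "xi 6 26 = 1"
  "xi 6 27 = 1"
  by (simp_all add: xi_def vec_of_list_def)

lemma e27_tab:
  "e27 (Suc 0) = 3"
  "e27 2 = 5"
  "e27 3 = 7"
  "e27 4 = 5"
  "e27 5 = 1"
  "e27 6 = 3"
  "e27 7 = 5"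
  "e27 8 = 7"
  "e27 9 = 1"
  "e27 10 = 3"
  "e27 11 = 5"
  "e27 12 = 5"
  "e27 13 = 3"
  "e27 14 = 7"
  "e27 15 = 3"
  "e27 16 = 3"
  "e27 17 = 7"
  "e27 18 = 1"
  "e27 19 = 7"
  "e27 20 = 3"
  "e27 21 = 1"
  "e27 22 = 5"
  "e27 23 = 5"
  "e27 24 = 5"
  "e27 25 = 3"
  "e27 26 = 5"
  "e27 27 = 3"
  by (simp_all add: e27_def)

lemma part1_nat: "(\<Sum>j\<in>{1..27}. e27 j * vb b1 b2 b3 b4 b5 b6 j) mod 8 = (4 * Q27 (vb b1 b2 b3 b4 b5 b6)) mod 8"
  unfolding s27 by (cases b1; cases b2; cases b3; cases b4; cases b5; cases b6; simp add: vb_def xi_tab e27_tab Q27_def)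

lemma part1: "x \<in> S27 \<Longrightarrow> (-1::complex) ^ Q27 x = (\<Prod>j\<in>{1..27}. c27 j ^ x j)"
proof -
  assume "x \<in> S27"
  then obtain b1 b2 b3 b4 b5 b6 where x: "x = vb b1 b2 b3 b4 b5 b6" using S27_cases by blast
  have "(-1::complex) ^ Q27 x = w ^ (4 * Q27 x)" by (simp add: w4 power_mult)
  also have "\<dots> = w ^ ((4 * Q27 x) mod 8)" by (rule w_mod)
  also have "\<dots> = w ^ ((\<Sum>j\<in>{1..27}. e27 j * x j) mod 8)" unfolding x part1_nat ..
  also have "\<dots> = w ^ (\<Sum>j\<in>{1..27}. e27 j * x j)" by (rule w_mod[symmetric])
  also have "\<dots> = (\<Prod>j\<in>{1..27}. c27 j ^ x j)" by (simp add: c27_w prod_pow)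
  finally show ?thesis .
qed

lemma i_mod: "\<i> ^ a = \<i> ^ (a mod 4)"
proof -
  have "\<i> ^ a = \<i> ^ (4 * (a div 4) + a mod 4)" by simp
  also have "\<dots> = \<i> ^ (a mod 4)" by (simp only: power_add power_mult) simp
  finally show ?thesis .
qed

lemma i_cases: "(p::nat) < 4 \<Longrightarrow> p = 0 \<or> p = 1 \<or> p = 2 \<or> p = 3" by auto

lemma i_pow_inj: "(p::nat) < 4 \<Longrightarrow> (q::nat) < 4 \<Longrightarrow> \<i> ^ p = \<i> ^ q \<Longrightarrow> p = q"
proof -
  assume p: "p < 4" and q: "q < 4" and h: "\<i> ^ p = \<i> ^ q"
  have i3: "\<i> ^ 3 = - \<i>" by (simp add: power3_eq_cube)
  have i2: "\<i> ^ 2 = (-1::complex)" by simp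
  from i_cases[OF p] i_cases[OF q] h show "p = q"
    by (elim disjE) (simp_all add: i3 i2 complex_eq_iff)
qed

lemma i_inj: "\<i> ^ a = \<i> ^ b \<Longrightarrow> a mod 4 = b mod 4"
proof -
  assume h: "\<i> ^ a = \<i> ^ b"
  have "\<i> ^ (a mod 4) = \<i> ^ (b mod 4)" using h i_mod[of a] i_mod[of b] by simp
  then show ?thesis using i_pow_inj[of "a mod 4" "b mod 4"] by simp
qed

lemma key:
  assumes f: "\<forall>j\<in>{1..27}. c' j = \<i> ^ f j"
    and h: "(-1::complex) ^ Q27 x = (\<Prod>j\<in>{1..27}. c' j ^ x j)"
  shows "\<exists>t::int. int (\<Sum>j\<in>{1..27}. f j * x j) = 2 * int (Q27 x) + 4 * t"
proof -
  have "(\<Prod>j\<in>{1..27}. c' j ^ x j) = (\<Prod>j\<in>{1..27}. (\<i> ^ f j) ^ x j)"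
    using f by (intro prod.cong) auto
  also have "\<dots> = \<i> ^ (\<Sum>j\<in>{1..27}. f j * x j)" by (rule prod_pow)
  finally have "\<i> ^ (2 * Q27 x) = \<i> ^ (\<Sum>j\<in>{1..27}. f j * x j)"
    using h by (simp add: power_mult)
  then have "(2 * Q27 x) mod 4 = (\<Sum>j\<in>{1..27}. f j * x j) mod 4" by (rule i_inj)
  then have "int (2 * Q27 x) mod 4 = int (\<Sum>j\<in>{1..27}. f j * x j) mod 4"
    by (metis of_nat_mod of_nat_numeral)
  then have "(4::int) dvd (int (2 * Q27 x) - int (\<Sum>j\<in>{1..27}. f j * x j))"
    by (simp only: mod_eq_dvd_iff)
  then obtain t where "int (2 * Q27 x) - int (\<Sum>j\<in>{1..27}. f j * x j) = 4 * t" by (elim dvdE)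
  then show ?thesis by (intro exI[of _ "-t"]) simp
qed

lemma lincomb9:
  fixes a0 a1 a2 a3 a4 a5 a6 a7 a8 b0 b1 b2 b3 b4 b5 b6 b7 b8 :: int
  shows "a0 = b0 \<Longrightarrow> a1 = b1 \<Longrightarrow> a2 = b2 \<Longrightarrow> a3 = b3 \<Longrightarrow> a4 = b4 \<Longrightarrow> a5 = b5 \<Longrightarrow> a6 = b6 \<Longrightarrow> a7 = b7 \<Longrightarrow> a8 = b8 \<Longrightarrow>
   c0 * a0 + c1 * a1 + c2 * a2 + c3 * a3 + c4 * a4 + c5 * a5 + c6 * a6 + c7 * a7 + c8 * a8 =
   c0 * b0 + c1 * b1 + c2 * b2 + c3 * b3 + c4 * b4 + c5 * b5 + c6 * b6 + c7 * b7 + c8 * b8"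
  by simp

lemma part2:
  assumes c: "\<forall>j\<in>{1..27}. c' j \<in> {1, -1, \<i>, -\<i>}"
    and H: "\<forall>x\<in>S27. (-1::complex) ^ Q27 x = (\<Prod>j\<in>{1..27}. c' j ^ x j)"
  shows False
proof -
  have "\<forall>j\<in>{1..27}. \<exists>k. c' j = \<i> ^ k"
  proof
    fix j assume "j \<in> {1..(27::nat)}"
    then have "c' j \<in> {1, -1, \<i>, -\<i>}" using c by blast
    then have "c' j = \<i>^0 \<or> c' j = \<i>^2 \<or> c' j = \<i>^1 \<or> c' j = \<i>^3"
      by (auto simp: power3_eq_cube)
    then show "\<exists>k. c' j = \<i> ^ k" by blast
  qed
  from bchoice[OF this] obtain f where f: "\<forall>j\<in>{1..27}. c' j = \<i> ^ f j" by blast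
  define g where "g = (\<lambda>j. int (f j))"
  have M0: "vb False False False False True True \<in> S27" using mem_S27[of "{5,6}"] vx_vb[of "{5,6}"] by simp
  obtain t0 where T0: "int (\<Sum>j\<in>{1..27}. f j * vb False False False False True True j) = 2 * int (Q27 (vb False False False False True True)) + 4 * t0"
    using key[OF f H[rule_format, OF M0]] by blast
  have E0: "(g 8 + g 9 + g 10 + g 11 + g 12 + g 13 + g 14 + g 15 + g 16 + g 17 + g 18 + g 19) = 2 + 4 * t0"
    using T0 unfolding s27 g_def by (simp add: vb_def xi_tab Q27_def)
  have M1: "vb False False False True True True \<in> S27" using mem_S27[of "{4,5,6}"] vx_vb[of "{4,5,6}"] by simp
  obtain t1 where T1: "int (\<Sum>j\<in>{1..27}. f j * vb False False False True True True j) = 2 * int (Q27 (vb False False False True True True)) + 4 * t1"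
    using key[OF f H[rule_format, OF M1]] by blast
  have E1: "(g 4 + g 5 + g 6 + g 7 + g 8 + g 9 + g 10 + g 11 + g 12 + g 13 + g 16 + g 17 + g 24 + g 25 + g 26 + g 27) = 0 + 4 * t1"
    using T1 unfolding s27 g_def by (simp add: vb_def xi_tab Q27_def)
  have M2: "vb False False True True True False \<in> S27" using mem_S27[of "{3,4,5}"] vx_vb[of "{3,4,5}"] by simp
  obtain t2 where T2: "int (\<Sum>j\<in>{1..27}. f j * vb False False True True True False j) = 2 * int (Q27 (vb False False True True True False)) + 4 * t2"
    using key[OF f H[rule_format, OF M2]] by blast
  have E2: "(g 2 + g 3 + g 4 + g 5 + g 8 + g 9 + g 16 + g 17 + g 20 + g 21 + g 26 + g 27) = 0 + 4 * t2"
    using T2 unfolding s27 g_def by (simp add: vb_def xi_tab Q27_def)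
  have M3: "vb False True False False False False \<in> S27" using mem_S27[of "{2}"] vx_vb[of "{2}"] by simp
  obtain t3 where T3: "int (\<Sum>j\<in>{1..27}. f j * vb False True False False False False j) = 2 * int (Q27 (vb False True False False False False)) + 4 * t3"
    using key[OF f H[rule_format, OF M3]] by blast
  have E3: "(g 1 + g 3 + g 5 + g 7 + g 8 + g 9 + g 12 + g 13 + g 21 + g 23 + g 25 + g 27) = 2 + 4 * t3"
    using T3 unfolding s27 g_def by (simp add: vb_def xi_tab Q27_def)
  have M4: "vb False True False False True False \<in> S27" using mem_S27[of "{2,5}"] vx_vb[of "{2,5}"] by simp
  obtain t4 where T4: "int (\<Sum>j\<in>{1..27}. f j * vb False True False False True False j) = 2 * int (Q27 (vb False True False False True False)) + 4 * t4"
    using key[OF f H[rule_format, OF M4]] by blast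
  have E4: "(g 1 + g 3 + g 5 + g 7 + g 10 + g 11 + g 14 + g 15 + g 20 + g 22 + g 24 + g 26) = 2 + 4 * t4"
    using T4 unfolding s27 g_def by (simp add: vb_def xi_tab Q27_def)
  have M5: "vb False True False True True False \<in> S27" using mem_S27[of "{2,4,5}"] vx_vb[of "{2,4,5}"] by simp
  obtain t5 where T5: "int (\<Sum>j\<in>{1..27}. f j * vb False True False True True False j) = 2 * int (Q27 (vb False True False True True False)) + 4 * t5"
    using key[OF f H[rule_format, OF M5]] by blast
  have E5: "(g 1 + g 3 + g 4 + g 6 + g 10 + g 11 + g 18 + g 19 + g 20 + g 22 + g 25 + g 27) = 0 + 4 * t5"
    using T5 unfolding s27 g_def by (simp add: vb_def xi_tab Q27_def)
  have M6: "vb False True True True False True \<in> S27" using mem_S27[of "{2,3,4,6}"] vx_vb[of "{2,3,4,6}"] by simp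
  obtain t6 where T6: "int (\<Sum>j\<in>{1..27}. f j * vb False True True True False True j) = 2 * int (Q27 (vb False True True True False True)) + 4 * t6"
    using key[OF f H[rule_format, OF M6]] by blast
  have E6: "(g 1 + g 2 + g 4 + g 7 + g 8 + g 9 + g 10 + g 11 + g 14 + g 15 + g 18 + g 19 + g 20 + g 23 + g 25 + g 26) = 2 + 4 * t6"
    using T6 unfolding s27 g_def by (simp add: vb_def xi_tab Q27_def)
  have M7: "vb True False False False False True \<in> S27" using mem_S27[of "{1,6}"] vx_vb[of "{1,6}"] by simp
  obtain t7 where T7: "int (\<Sum>j\<in>{1..27}. f j * vb True False False False False True j) = 2 * int (Q27 (vb True False False False False True)) + 4 * t7"
    using key[OF f H[rule_format, OF M7]] by blast
  have E7: "(g 1 + g 5 + g 9 + g 11 + g 13 + g 15 + g 16 + g 18 + g 20 + g 21 + g 22 + g 27) = 0 + 4 * t7"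
    using T7 unfolding s27 g_def by (simp add: vb_def xi_tab Q27_def)
  have M8: "vb True False False False True False \<in> S27" using mem_S27[of "{1,5}"] vx_vb[of "{1,5}"] by simp
  obtain t8 where T8: "int (\<Sum>j\<in>{1..27}. f j * vb True False False False True False j) = 2 * int (Q27 (vb True False False False True False)) + 4 * t8"
    using key[OF f H[rule_format, OF M8]] by blast
  have E8: "(g 1 + g 5 + g 8 + g 10 + g 12 + g 14 + g 17 + g 19 + g 20 + g 21 + g 22 + g 27) = 2 + 4 * t8"
    using T8 unfolding s27 g_def by (simp add: vb_def xi_tab Q27_def)
  note C = lincomb9[OF E0 E1 E2 E3 E4 E5 E6 E7 E8, of 3 1 3 3 3 3 1 1 1]
  have "4 * ((3 * g 1 + 1 * g 2 + 3 * g 3 + 2 * g 4 + 3 * g 5 + 1 * g 6 + 2 * g 7 + 3 * g 8 + 3 * g 9 + 3 * g 10 + 3 * g 11 + 2 * g 12 + 2 * g 13 + 2 * g 14 + 2 * g 15 + 2 * g 16 + 2 * g 17 + 2 * g 18 + 2 * g 19 + 3 * g 20 + 2 * g 21 + 2 * g 22 + 1 * g 23 + 1 * g 24 + 2 * g 25 + 2 * g 26 + 3 * g 27) - (3 * t0 + 1 * t1 + 3 * t2 + 3 * t3 + 3 * t4 + 3 * t5 + 1 * t6 + 1 * t7 + 1 * t8)) = 22" using C by (simp add: algebra_simps)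
  then have "\<exists>z::int. 4 * z = 22" by blast
  then show False by presburger
qed

theorem mainTheorem2:
  shows "(\<forall>x\<in>S27. (-1::complex) ^ Q27 x = (\<Prod>j\<in>{1..27}. c27 j ^ x j))
    \<and> \<not> (\<exists>c'::nat \<Rightarrow> complex. (\<forall>j\<in>{1..27}. c' j \<in> {1, -1, \<i>, -\<i>})
           \<and> (\<forall>x\<in>S27. (-1::complex) ^ Q27 x = (\<Prod>j\<in>{1..27}. c' j ^ x j)))
    \<and> \<not> (\<forall>(n::nat) S Q. F2_subspace n S \<and> quadratic_fun n Q
           \<and> (\<exists>c::nat \<Rightarrow> complex. (\<forall>j\<in>{1..n}. norm (c j) = 1)
                \<and> (\<forall>x\<in>S. (-1::complex) ^ Q x = (\<Prod>j\<in>{1..n}. c j ^ x j)))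
         \<longrightarrow> (\<exists>c'::nat \<Rightarrow> complex. (\<forall>j\<in>{1..n}. c' j \<in> {1, -1, \<i>, -\<i>})
                \<and> (\<forall>x\<in>S. (-1::complex) ^ Q x = (\<Prod>j\<in>{1..n}. c' j ^ x j))))"
proof -
  have n1: "\<forall>j\<in>{1..27}. norm (c27 j) = 1" by (simp add: c27_def)
  show ?thesis
  proof (intro conjI notI)
    show "\<forall>x\<in>S27. (-1::complex) ^ Q27 x = (\<Prod>j\<in>{1..27}. c27 j ^ x j)"
      using part1 by blast
  next
    assume "\<exists>c'::nat \<Rightarrow> complex. (\<forall>j\<in>{1..27}. c' j \<in> {1, -1, \<i>, -\<i>})
           \<and> (\<forall>x\<in>S27. (-1::complex) ^ Q27 x = (\<Prod>j\<in>{1..27}. c' j ^ x j))"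
    then obtain c' where "\<forall>j\<in>{1..27}. c' j \<in> {1, -1, \<i>, -\<i>}"
      "\<forall>x\<in>S27. (-1::complex) ^ Q27 x = (\<Prod>j\<in>{1..27}. c' j ^ x j)" by blast
    then show False by (rule part2)
  next
    assume A: "\<forall>(n::nat) S Q. F2_subspace n S \<and> quadratic_fun n Q
           \<and> (\<exists>c::nat \<Rightarrow> complex. (\<forall>j\<in>{1..n}. norm (c j) = 1)
                \<and> (\<forall>x\<in>S. (-1::complex) ^ Q x = (\<Prod>j\<in>{1..n}. c j ^ x j)))
         \<longrightarrow> (\<exists>c'::nat \<Rightarrow> complex. (\<forall>j\<in>{1..n}. c' j \<in> {1, -1, \<i>, -\<i>})
                \<and> (\<forall>x\<in>S. (-1::complex) ^ Q x = (\<Prod>j\<in>{1..n}. c' j ^ x j)))"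
    have pre: "F2_subspace 27 S27 \<and> quadratic_fun 27 Q27
           \<and> (\<exists>c::nat \<Rightarrow> complex. (\<forall>j\<in>{1..27}. norm (c j) = 1)
                \<and> (\<forall>x\<in>S27. (-1::complex) ^ Q27 x = (\<Prod>j\<in>{1..27}. c j ^ x j)))"
      using subspace quad n1 part1 by blast
    have "\<exists>c'::nat \<Rightarrow> complex. (\<forall>j\<in>{1..27}. c' j \<in> {1, -1, \<i>, -\<i>})
                \<and> (\<forall>x\<in>S27. (-1::complex) ^ Q27 x = (\<Prod>j\<in>{1..27}. c' j ^ x j))"
      using spec[OF spec[OF spec[OF A, of 27], of S27], of Q27] pre by (rule mp)
    then obtain c' where "\<forall>j\<in>{1..27}. c' j \<in> {1, -1, \<i>, -\<i>}"
      "\<forall>x\<in>S27. (-1::complex) ^ Q27 x = (\<Prod>j\<in>{1..27}. c' j ^ x j)" by blast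
    then show False by (rule part2)
  qed
qed

end
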